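(* Let $n,m,\ell$ be positive integers with $m\le n-1$ and $\ell\le n-1$. Then $$\sum_{j=0}^{n-m-1}\binom{m-\ell+2j}{j}\,\mathcal Y_n\big(2^{\{n-m-j-1\}},1^{\{m-\ell+2j\}}\big)=\frac{1}{n^2}\binom{n}{m}\binom{n}{\ell}.$$
   Context: Let $\zeta_n=e^{2\pi\sqrt{-1}/n}$. For positive integers $s_1,\dots,s_m$, define $\mathfrak Z_n(s_1,\dots,s_m):=\sum_{1\le i_1<\cdots<i_m\le n-1}\prod_{k=1}^{m}(1-\zeta_n^{i_k})^{-s_k}$ (equal to $1$ if $m=0$ and to $0$ if $m>n-1$). Define $\mathcal Y_n(s_1,\dots,s_m):=\sum_{\sigma}\mathfrak Z_n(\sigma)$, where $\sigma$ runs over all distinct rearrangements of $(s_1,\dots,s_m)$; $\mathcal Y_n$ of the empty sequence is $1$. Notation: $a^{\{k\}}$ denotes the block $a,\dots,a$ of length $k$; any $\mathcal Y_n$ term in which some block has negative length is interpreted as $0$. Binomial coefficients $\binom{a}{b}$ are $0$ when $b<0$ or $b>a\ge0$. *)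

theory Defs
  imports Complex_Main "HOL-Combinatorics.Multiset_Permutations"
begin

definition zeta :: "nat \<Rightarrow> complex" where
  "zeta n = exp (2 * of_real pi * \<i> / of_nat n)"

text \<open>Cyclotomic multiple zeta value Z_n(s_1,...,s_m): sum over index sets
  {i_1 < ... < i_m} contained in {1..n-1}, listed increasingly.\<close>
definition frakZ :: "nat \<Rightarrow> nat list \<Rightarrow> complex" where
  "frakZ n s = (\<Sum>I | I \<subseteq> {1..n-1} \<and> card I = length s.
      \<Prod>k<length s. inverse ((1 - zeta n ^ (sorted_list_of_set I ! k)) ^ (s ! k)))"

definition calY :: "nat \<Rightarrow> nat list \<Rightarrow> complex" where
  "calY n s = (\<Sum>\<sigma>\<in>permutations_of_multiset (mset s). frakZ n \<sigma>)"

end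

theory Submission imports Defs "HOL-Computational_Algebra.Fundamental_Theorem_Algebra" begin

lemma roots_unity_poly:
  assumes n: "n > 0"
  shows "(\<Prod>z | z ^ n = 1. w - z) = w ^ n - (1::complex)"
proof -
  define p :: "complex poly" where "p = monom 1 n - 1"
  have pz: "poly p z = z ^ n - 1" for z by (simp add: p_def poly_monom)
  have "pderiv p = monom (of_nat n) (n - 1)" by (simp add: p_def pderiv_diff pderiv_monom)
  hence pdz: "poly (pderiv p) z = of_nat n * z ^ (n - 1)" for z by (simp add: poly_monom)
  have rs: "rsquarefree p"
    unfolding rsquarefree_roots
  proof (intro allI notI)
    fix a assume "poly p a = 0 \<and> poly (pderiv p) a = 0"
    hence "a ^ n = 1" "a ^ (n-1) = 0" using n by (auto simp: pz pdz)
    thus False using n by (metis power_eq_0_iff zero_neq_one power_0 linorder_not_less)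
  qed
  have deg: "degree p = n"
  proof -
    have "p = monom 1 n + (-1)" by (simp add: p_def)
    also have "degree \<dots> = degree (monom (1::complex) n)"
      by (rule degree_add_eq_left) (use n in \<open>simp add: degree_monom_eq\<close>)
    finally show ?thesis by (simp add: degree_monom_eq)
  qed
  have lc: "lead_coeff p = 1" using n deg unfolding p_def by (simp add: coeff_monom)
  have "smult (lead_coeff p) (\<Prod>z | poly p z = 0. [:-z, 1:]) = p"
    by (rule complex_poly_decompose_rsquarefree[OF rs])
  hence "poly (\<Prod>z | poly p z = 0. [:-z, 1:]) w = poly p w" using lc by simp
  hence "(\<Prod>z | poly p z = 0. w - z) = w ^ n - 1" by (simp add: poly_prod pz)
  thus ?thesis by (simp add: pz)
qed

lemma zeta_pow: "zeta n ^ k = cis (2 * pi * real k / real n)"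
  unfolding zeta_def cis_conv_exp
  by (simp add: exp_of_nat_mult[symmetric] field_simps)

lemma prod_zeta_all:
  assumes n: "n > 0"
  shows "(\<Prod>k<n. w - zeta n ^ k) = w ^ n - (1::complex)"
proof -
  have "(\<Prod>k<n. w - zeta n ^ k) = (\<Prod>k<n. w - cis (2 * pi * real k / real n))"
    by (simp add: zeta_pow)
  also have "\<dots> = (\<Prod>z | z ^ n = 1. w - z)"
    by (rule prod.reindex_bij_betw[OF bij_betw_roots_unity[OF n]])
  also have "\<dots> = w ^ n - 1" by (rule roots_unity_poly[OF n])
  finally show ?thesis .
qed

lemma prod_zeta:
  assumes n: "n > 0"
  shows "(\<Prod>k\<in>{1..n-1}. w - zeta n ^ k) = (\<Sum>k<n. w ^ k)"
proof -
  define P where "P = (\<lambda>w. \<Prod>k\<in>{1..n-1}. w - zeta n ^ k)"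
  define Q where "Q = (\<lambda>w::complex. \<Sum>k<n. w ^ k)"
  have split: "{..<n} = insert 0 {1..n-1}" using n by auto
  have eq: "P w = Q w" if "w \<noteq> 1" for w
  proof -
    have "(w - 1) * P w = w ^ n - 1"
      using prod_zeta_all[OF n, of w] unfolding split P_def by (simp add: prod.insert)
    also have "\<dots> = (w - 1) * Q w" unfolding Q_def by (simp add: power_diff_1_eq)
    finally show ?thesis using that by simp
  qed
  have cP: "isCont P 1" unfolding P_def by (intro continuous_intros)
  have cQ: "isCont Q 1" unfolding Q_def by (intro continuous_intros)
  have l1: "(P \<longlongrightarrow> Q 1) (at 1)"
  proof (rule Lim_transform_eventually)
    show "(Q \<longlongrightarrow> Q 1) (at 1)" using cQ by (simp add: isCont_def)
    show "\<forall>\<^sub>F x in at 1. Q x = P x" by (auto simp: eventually_at_filter eq)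
  qed
  have l2: "(P \<longlongrightarrow> P 1) (at 1)" using cP by (simp add: isCont_def)
  have "P 1 = Q 1" by (rule tendsto_unique[OF _ l2 l1]) simp
  hence "P w = Q w" using eq by (cases "w = 1") auto
  thus ?thesis by (simp add: P_def Q_def)
qed

lemma prod_one_plus:
  fixes f :: "'a \<Rightarrow> 'b::comm_ring_1"
  assumes "finite A"
  shows "(\<Prod>i\<in>A. 1 + x * f i) = (\<Sum>k\<le>card A. (\<Sum>C | C \<subseteq> A \<and> card C = k. \<Prod>i\<in>C. f i) * x ^ k)"
proof -
  have "(\<Prod>i\<in>A. 1 + x * f i) = (\<Prod>i\<in>A. x * f i + 1)" by (simp add: add.commute)
  also have "\<dots> = (\<Sum>X\<in>Pow A. (\<Prod>i\<in>X. x * f i) * (\<Prod>i\<in>A-X. 1))"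
    by (rule prod_add[OF assms])
  also have "\<dots> = (\<Sum>X\<in>Pow A. (\<Prod>i\<in>X. f i) * x ^ card X)"
    by (simp add: prod.distrib mult.commute)
  also have "\<dots> = (\<Sum>k\<in>{..card A}. \<Sum>X | X \<in> Pow A \<and> card X = k. (\<Prod>i\<in>X. f i) * x ^ card X)"
    by (rule sum.group[symmetric]) (use assms in \<open>auto intro: card_mono\<close>)
  also have "\<dots> = (\<Sum>k\<le>card A. (\<Sum>C | C \<subseteq> A \<and> card C = k. \<Prod>i\<in>C. f i) * x ^ k)"
    by (intro sum.cong refl) (auto simp: sum_distrib_right)
  finally show ?thesis .
qed

lemma geom_binom: "(\<Sum>k<n. (1 + x) ^ k) = (\<Sum>k<n. of_nat (n choose (k+1)) * (x::complex) ^ k)"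
proof (induction n)
  case 0 thus ?case by simp
next
  case (Suc n)
  have b: "(1 + x) ^ n = (\<Sum>k\<le>n. of_nat (n choose k) * x ^ k)"
    by (subst add.commute, subst binomial_ring) simp
  have "(\<Sum>k<Suc n. (1 + x) ^ k) = (\<Sum>k<n. of_nat (n choose (k+1)) * x ^ k) + (\<Sum>k\<le>n. of_nat (n choose k) * x ^ k)"
    using Suc b by simp
  also have "(\<Sum>k\<le>n. of_nat (n choose k) * x ^ k) = (\<Sum>k<Suc n. of_nat (n choose k) * x ^ k)"
    by (simp add: lessThan_Suc_atMost)
  also have "(\<Sum>k<n. of_nat (n choose (k+1)) * x ^ k) = (\<Sum>k<Suc n. of_nat (n choose (k+1)) * x ^ k)"
    by simp
  also have "\<dots> + (\<Sum>k<Suc n. of_nat (n choose k) * x ^ k) = (\<Sum>k<Suc n. of_nat (Suc n choose (k+1)) * x ^ k)"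
    by (simp add: sum.distrib[symmetric] algebra_simps)
  finally show ?case .
qed

definition yy :: "nat \<Rightarrow> nat \<Rightarrow> complex" where "yy n i = inverse (1 - zeta n ^ i)"

lemma esym:
  assumes n: "n > 0" and k: "k \<le> n - 1"
  shows "(\<Sum>C | C \<subseteq> {1..n-1} \<and> card C = k. \<Prod>i\<in>C. yy n i) = of_nat (n choose (k+1)) / of_nat n"
proof -
  have p1: "(\<Prod>k\<in>{1..n-1}. 1 - zeta n ^ k) = of_nat n"
    using prod_zeta[OF n, of 1] by simp
  have nz: "1 - zeta n ^ i \<noteq> 0" if "i \<in> {1..n-1}" for i
    using p1 n that by (metis (no_types, lifting) finite_atLeastAtMost of_nat_0_eq_iff prod_zero_iff less_irrefl)
  have "(\<Prod>i\<in>{1..n-1}. 1 + x * yy n i) = (\<Sum>k\<le>n-1. of_nat (n choose (k+1)) / of_nat n * x ^ k)" for x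
  proof -
    have "(\<Prod>i\<in>{1..n-1}. 1 + x * yy n i) = (\<Prod>i\<in>{1..n-1}. ((1 + x) - zeta n ^ i) * yy n i)"
      by (intro prod.cong refl) (use nz in \<open>auto simp: yy_def field_simps\<close>)
    also have "\<dots> = (\<Prod>i\<in>{1..n-1}. (1 + x) - zeta n ^ i) * inverse (\<Prod>i\<in>{1..n-1}. 1 - zeta n ^ i)"
      by (simp add: prod.distrib yy_def prod_inversef[symmetric] o_def)
    also have "\<dots> = (\<Sum>k<n. (1 + x) ^ k) / of_nat n"
      unfolding prod_zeta[OF n, of "1+x"] p1 by (simp add: divide_inverse)
    also have "\<dots> = (\<Sum>k<n. of_nat (n choose (k+1)) / of_nat n * x ^ k)"
      by (simp add: geom_binom sum_divide_distrib)
    also have "{..<n} = {..n-1}" using n by auto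
    finally show ?thesis .
  qed
  hence "\<forall>x. (\<Sum>k\<le>n-1. (\<Sum>C | C \<subseteq> {1..n-1} \<and> card C = k. \<Prod>i\<in>C. yy n i) * x ^ k) = (\<Sum>k\<le>n-1. of_nat (n choose (k+1)) / of_nat n * x ^ k)"
    using prod_one_plus[of "{1..n-1}" _ "yy n"] by simp
  thus ?thesis using k by (subst (asm) polyfun_eq_coeffs) blast
qed

lemma mset_sl: "mset (sorted_list_of_set A) = mset_set A"
  by (metis mset_sorted_list_of_multiset sorted_list_of_mset_set)

lemma mset_phi:
  assumes I: "finite I" and A: "A \<subseteq> I"
  shows "mset (map (\<lambda>i. if i \<in> A then 2 else 1) (sorted_list_of_set I))
         = replicate_mset (card A) (2::nat) + replicate_mset (card (I - A)) 1"
proof -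
  have fA: "finite A" using I A finite_subset by blast
  have "I = A \<union> (I - A)" using A by blast
  hence "mset_set I = mset_set A + mset_set (I - A)"
    using I fA by (metis Diff_disjoint finite_Diff mset_set_Union)
  hence "mset (map (\<lambda>i. if i \<in> A then 2 else 1) (sorted_list_of_set I))
     = image_mset (\<lambda>i. if i \<in> A then 2 else 1) (mset_set A) + image_mset (\<lambda>i. if i \<in> A then 2 else 1) (mset_set (I - A))"
    by (simp add: mset_sl)
  also have "image_mset (\<lambda>i. if i \<in> A then 2 else 1) (mset_set A) = image_mset (\<lambda>_. 2::nat) (mset_set A)"
    by (rule image_mset_cong) (use fA in auto)
  also have "image_mset (\<lambda>i. if i \<in> A then 2 else 1) (mset_set (I - A)) = image_mset (\<lambda>_. 1::nat) (mset_set (I - A))"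
    by (rule image_mset_cong) (use I in auto)
  finally show ?thesis by (simp add: image_mset_const_eq fA I)
qed

lemma perm_sum:
  fixes g :: "nat \<Rightarrow> complex"
  assumes I: "finite I" and cI: "card I = p + q"
  shows "(\<Sum>\<sigma>\<in>permutations_of_multiset (mset (replicate p 2 @ replicate q (1::nat))).
            \<Prod>k<p+q. g (sorted_list_of_set I ! k) ^ (\<sigma> ! k))
       = (\<Sum>A | A \<subseteq> I \<and> card A = p. (\<Prod>i\<in>A. g i ^ 2) * (\<Prod>i\<in>I-A. g i))"
proof -
  define L where "L = sorted_list_of_set I"
  define N where "N = p + q"
  define M where "M = mset (replicate p 2 @ replicate q (1::nat))"
  have M: "M = replicate_mset p 2 + replicate_mset q 1" by (simp add: M_def)
  have dL: "distinct L" and sL: "set L = I" and lL: "length L = N"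
    using I cI by (auto simp: L_def N_def)
  define j where "j = (\<lambda>A. map (\<lambda>i. if i \<in> A then 2 else 1::nat) L)"
  define i where "i = (\<lambda>\<sigma>::nat list. {L ! k | k. k < N \<and> \<sigma> ! k = 2})"
  have mj: "mset (j A) = replicate_mset (card A) 2 + replicate_mset (card (I - A)) 1" if "A \<subseteq> I" for A
    unfolding j_def L_def by (rule mset_phi[OF I that])
  have iS: "i \<sigma> \<subseteq> I" for \<sigma> using sL lL unfolding i_def by auto
  have ji: "j (i \<sigma>) = \<sigma>" if "\<sigma> \<in> permutations_of_multiset M" for \<sigma>
  proof -
    have ms: "mset \<sigma> = M" using that by (simp add: permutations_of_multiset_def)
    have len: "length \<sigma> = N" using arg_cong[OF ms, of size] by (simp add: M N_def)
    have vals: "\<sigma> ! k \<in> {1, 2}" if "k < N" for k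
    proof -
      have "\<sigma> ! k \<in> set \<sigma>" using that len by simp
      also have "set \<sigma> = set_mset M" using ms by (metis set_mset_mset)
      finally show ?thesis by (auto simp: M split: if_splits)
    qed
    have mem: "L ! k \<in> i \<sigma> \<longleftrightarrow> \<sigma> ! k = 2" if "k < N" for k
    proof
      assume "L ! k \<in> i \<sigma>"
      then obtain k' where "L ! k = L ! k'" "k' < N" "\<sigma> ! k' = 2" unfolding i_def by auto
      thus "\<sigma> ! k = 2" using dL lL that by (metis nth_eq_iff_index_eq)
    qed (use that in \<open>auto simp: i_def\<close>)
    show ?thesis
    proof (rule nth_equalityI)
      show "length (j (i \<sigma>)) = length \<sigma>" by (simp add: j_def lL len)
      fix k assume "k < length (j (i \<sigma>))"
      hence k: "k < N" by (simp add: j_def lL)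
      show "j (i \<sigma>) ! k = \<sigma> ! k" using mem[OF k] vals[OF k] k lL by (auto simp: j_def)
    qed
  qed
  have ij: "i (j A) = A" if "A \<subseteq> I" for A
  proof -
    have "i (j A) = {L ! k | k. k < N \<and> L ! k \<in> A}" unfolding i_def j_def using lL by (auto split: if_splits)
    also have "\<dots> = A" using that sL lL by (fastforce simp: in_set_conv_nth)
    finally show ?thesis .
  qed
  have "(\<Sum>A | A \<subseteq> I \<and> card A = p. (\<Prod>i\<in>A. g i ^ 2) * (\<Prod>i\<in>I-A. g i)) = 
     (\<Sum>\<sigma>\<in>permutations_of_multiset M. \<Prod>k<N. g (L ! k) ^ (\<sigma> ! k))"
  proof (rule sum.reindex_bij_witness[of _ i j])
    fix \<sigma> assume s: "\<sigma> \<in> permutations_of_multiset M"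
    show "j (i \<sigma>) = \<sigma>" by (rule ji[OF s])
    have "mset (j (i \<sigma>)) = M" using ji[OF s] s by (simp add: permutations_of_multiset_def)
    hence "count (mset (j (i \<sigma>))) 2 = count M 2" by simp
    hence "card (i \<sigma>) = p" using mj[OF iS] by (simp add: M)
    thus "i \<sigma> \<in> {A. A \<subseteq> I \<and> card A = p}" using iS by simp
  next
    fix A assume A: "A \<in> {A. A \<subseteq> I \<and> card A = p}"
    show "i (j A) = A" using A ij by simp
    have "card (I - A) = q" 
    proof -
      have "finite A" using A I finite_subset by auto
      thus ?thesis using A cI by (simp add: card_Diff_subset)
    qed
    thus "j A \<in> permutations_of_multiset M" using A mj
      by (simp add: permutations_of_multiset_def M)
    have "(\<Prod>k<N. g (L ! k) ^ (j A ! k)) = (\<Prod>k<N. (\<lambda>x. if x \<in> A then g x ^ 2 else g x) (L ! k))"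
      by (intro prod.cong refl) (auto simp: j_def lL)
    also have "\<dots> = (\<Prod>x\<in>I. if x \<in> A then g x ^ 2 else g x)"
    proof -
      have "bij_betw ((!) L) {..<N} I" using dL sL lL
        by (metis atLeast0LessThan bij_betw_nth)
      thus ?thesis by (rule prod.reindex_bij_betw)
    qed
    also have "\<dots> = (\<Prod>i\<in>A. g i ^ 2) * (\<Prod>i\<in>I-A. g i)"
      using A I by (simp add: prod.If_cases Int_absorb1 Diff_eq)
    finally show "(\<Prod>k<N. g (L ! k) ^ (j A ! k)) = (\<Prod>i\<in>A. g i ^ 2) * (\<Prod>i\<in>I-A. g i)" .
  qed
  thus ?thesis by (subst eq_commute) (simp add: L_def N_def M_def)
qed

definition TT :: "nat \<Rightarrow> nat \<Rightarrow> nat \<Rightarrow> complex" where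
  "TT n p q = (\<Sum>I | I \<subseteq> {1..n-1} \<and> card I = p + q.
      \<Sum>A | A \<subseteq> I \<and> card A = p. (\<Prod>i\<in>A. yy n i ^ 2) * (\<Prod>i\<in>I-A. yy n i))"

lemma calY_TT: "calY n (replicate p 2 @ replicate q 1) = TT n p q"
proof -
  define P where "P = permutations_of_multiset (mset (replicate p 2 @ replicate q (1::nat)))"
  have "calY n (replicate p 2 @ replicate q 1) = (\<Sum>\<sigma>\<in>P. frakZ n \<sigma>)"
    by (simp add: calY_def P_def)
  also have "\<dots> = (\<Sum>\<sigma>\<in>P. \<Sum>I | I \<subseteq> {1..n-1} \<and> card I = p + q.
                 \<Prod>k<p+q. yy n (sorted_list_of_set I ! k) ^ (\<sigma> ! k))"
  proof (intro sum.cong refl)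
    fix \<sigma> assume "\<sigma> \<in> P"
    hence "mset \<sigma> = mset (replicate p 2 @ replicate q (1::nat))" by (simp add: P_def permutations_of_multiset_def)
    hence len: "length \<sigma> = p + q" by (metis length_append length_replicate size_mset)
    show "frakZ n \<sigma> = (\<Sum>I | I \<subseteq> {1..n-1} \<and> card I = p + q.
                 \<Prod>k<p+q. yy n (sorted_list_of_set I ! k) ^ (\<sigma> ! k))"
      unfolding frakZ_def len by (simp add: yy_def power_inverse)
  qed
  also have "\<dots> = (\<Sum>I | I \<subseteq> {1..n-1} \<and> card I = p + q. \<Sum>\<sigma>\<in>P.
                 \<Prod>k<p+q. yy n (sorted_list_of_set I ! k) ^ (\<sigma> ! k))"
    by (rule sum.swap)
  also have "\<dots> = TT n p q" unfolding TT_def P_def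
    by (intro sum.cong refl perm_sum) (auto intro: finite_subset)
  finally show ?thesis .
qed

lemma prod_split2:
  fixes g :: "'a \<Rightarrow> complex"
  assumes "finite C" "finite D"
  shows "(\<Prod>i\<in>C. g i) * (\<Prod>i\<in>D. g i) = (\<Prod>i\<in>C\<inter>D. g i ^ 2) * (\<Prod>i\<in>(C\<union>D)-(C\<inter>D). g i)"
proof -
  have c: "(\<Prod>i\<in>C. g i) = (\<Prod>i\<in>C\<inter>D. g i) * (\<Prod>i\<in>C-D. g i)"
  proof -
    have "(\<Prod>i\<in>C. g i) = (\<Prod>i\<in>C-(C\<inter>D). g i) * (\<Prod>i\<in>C\<inter>D. g i)"
      by (rule prod.subset_diff) (use assms in auto)
    moreover have "C-(C\<inter>D) = C - D" by blast
    ultimately show ?thesis by (simp add: mult.commute)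
  qed
  have d: "(\<Prod>i\<in>D. g i) = (\<Prod>i\<in>C\<inter>D. g i) * (\<Prod>i\<in>D-C. g i)"
  proof -
    have "(\<Prod>i\<in>D. g i) = (\<Prod>i\<in>D-(C\<inter>D). g i) * (\<Prod>i\<in>C\<inter>D. g i)"
      by (rule prod.subset_diff) (use assms in auto)
    moreover have "D-(C\<inter>D) = D - C" by blast
    ultimately show ?thesis by (simp add: mult.commute)
  qed
  have u: "(C\<union>D)-(C\<inter>D) = (C-D) \<union> (D-C)" by blast
  have e: "(\<Prod>i\<in>(C\<union>D)-(C\<inter>D). g i) = (\<Prod>i\<in>C-D. g i) * (\<Prod>i\<in>D-C. g i)"
    unfolding u using assms by (intro prod.union_disjoint) auto
  show ?thesis unfolding c d e by (simp add: power2_eq_square prod.distrib mult_ac)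
qed

lemma fiber_card:
  assumes S: "finite S" and I: "I \<subseteq> S" and A: "A \<subseteq> I" and cA: "card A \<le> a" "card A \<le> b"
    and cI: "card I = a + b - card A"
  shows "card {x \<in> {C. C \<subseteq> S \<and> card C = a} \<times> {D. D \<subseteq> S \<and> card D = b}.
             (\<lambda>(C,D). (C \<union> D, C \<inter> D)) x = (I, A)} = (card I - card A) choose (a - card A)"
proof -
  have fI: "finite I" using S I finite_subset by blast
  have fA: "finite A" using fI A finite_subset by blast
  define F where "F = {x \<in> {C. C \<subseteq> S \<and> card C = a} \<times> {D. D \<subseteq> S \<and> card D = b}.
             (\<lambda>(C,D). (C \<union> D, C \<inter> D)) x = (I, A)}"
  define E where "E = {E. E \<subseteq> I - A \<and> card E = a - card A}"
  have "bij_betw (\<lambda>E. (A \<union> E, I - E)) E F"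
  proof (rule bij_betw_byWitness[where f' = "\<lambda>(C,D). C - D"])
    show "\<forall>e\<in>E. (\<lambda>(C,D). C - D) (A \<union> e, I - e) = e" unfolding E_def using A by auto
    show "\<forall>x\<in>F. (\<lambda>E. (A \<union> E, I - E)) ((\<lambda>(C,D). C - D) x) = x" unfolding F_def by auto
    show "(\<lambda>E. (A \<union> E, I - E)) ` E \<subseteq> F"
    proof
      fix x assume "x \<in> (\<lambda>E. (A \<union> E, I - E)) ` E"
      then obtain e where e: "e \<subseteq> I - A" "card e = a - card A" and x: "x = (A \<union> e, I - e)"
        unfolding E_def by auto
      have fe: "finite e" using e fI finite_subset by blast
      have "card (A \<union> e) = card A + card e" using e fA fe by (intro card_Un_disjoint) auto
      hence c1: "card (A \<union> e) = a" using e cA by simp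
      have "card (I - e) = card I - card e" using e fe by (intro card_Diff_subset) auto
      hence c2: "card (I - e) = b" using e cA cI by simp
      show "x \<in> F" unfolding F_def x using c1 c2 e A I by auto
    qed
    show "(\<lambda>(C,D). C - D) ` F \<subseteq> E"
    proof
      fix e assume "e \<in> (\<lambda>(C,D). C - D) ` F"
      then obtain C D where CD: "C \<subseteq> S" "card C = a" "D \<subseteq> S" "card D = b" "C \<union> D = I" "C \<inter> D = A"
        and e: "e = C - D" unfolding F_def by auto
      have fC: "finite C" using CD S finite_subset by blast
      have "card (C - D) = card C - card (C \<inter> D)" using fC by (simp add: card_Diff_subset_Int)
      thus "e \<in> E" unfolding E_def e using CD by auto
    qed
  qed
  hence "card F = card E" by (rule bij_betw_same_card[symmetric])
  also have "card E = card (I - A) choose (a - card A)" unfolding E_def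
    by (rule n_subsets) (use fI in auto)
  also have "card (I - A) = card I - card A" using A fA by (simp add: card_Diff_subset)
  finally show ?thesis by (simp add: F_def)
qed

definition TS :: "'a set \<Rightarrow> ('a \<Rightarrow> complex) \<Rightarrow> nat \<Rightarrow> nat \<Rightarrow> complex" where
  "TS S g p q = (\<Sum>I | I \<subseteq> S \<and> card I = p + q.
      \<Sum>A | A \<subseteq> I \<and> card A = p. (\<Prod>i\<in>A. g i ^ 2) * (\<Prod>i\<in>I-A. g i))"

lemma pair_sum:
  fixes g :: "'a \<Rightarrow> complex"
  assumes S: "finite S"
  shows "(\<Sum>C | C \<subseteq> S \<and> card C = a. \<Prod>i\<in>C. g i) * (\<Sum>D | D \<subseteq> S \<and> card D = b. \<Prod>i\<in>D. g i)
    = (\<Sum>p\<le>min a b. of_nat ((a + b - 2 * p) choose (a - p)) * TS S g p (a + b - 2 * p))"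
proof -
  define XC where "XC = {C. C \<subseteq> S \<and> card C = a}"
  define XD where "XD = {D. D \<subseteq> S \<and> card D = b}"
  define X where "X = XC \<times> XD"
  define f where "f = (\<lambda>(C::'a set, D::'a set). (C \<union> D, C \<inter> D))"
  define w where "w = (\<lambda>(I::'a set, A::'a set). (\<Prod>i\<in>A. g i ^ 2) * (\<Prod>i\<in>I-A. g i))"
  define Y where "Y = {(I, A). I \<subseteq> S \<and> A \<subseteq> I \<and> card A \<le> a \<and> card A \<le> b \<and> card I = a + b - card A}"
  have fXC: "finite XC" unfolding XC_def by (rule finite_subset[of _ "Pow S"]) (use S in auto)
  have fXD: "finite XD" unfolding XD_def by (rule finite_subset[of _ "Pow S"]) (use S in auto)
  have fX: "finite X" unfolding X_def using fXC fXD by simp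
  have fY: "finite Y"
  proof (rule finite_subset)
    show "Y \<subseteq> Pow S \<times> Pow S" unfolding Y_def by auto
    show "finite (Pow S \<times> Pow S)" using S by simp
  qed
  have "(\<Sum>C\<in>XC. \<Prod>i\<in>C. g i) * (\<Sum>D\<in>XD. \<Prod>i\<in>D. g i) = (\<Sum>C\<in>XC. \<Sum>D\<in>XD. (\<Prod>i\<in>C. g i) * (\<Prod>i\<in>D. g i))"
    by (rule sum_product)
  also have "\<dots> = (\<Sum>(C,D)\<in>X. (\<Prod>i\<in>C. g i) * (\<Prod>i\<in>D. g i))"
    unfolding X_def by (rule sum.cartesian_product)
  also have "\<dots> = (\<Sum>x\<in>X. w (f x))"
  proof (intro sum.cong refl)
    fix x assume "x \<in> X"
    then obtain C D where x: "x = (C, D)" "C \<subseteq> S" "D \<subseteq> S" unfolding X_def XC_def XD_def by auto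
    have "finite C" "finite D" using x S finite_subset by auto
    thus "(case x of (C, D) \<Rightarrow> (\<Prod>i\<in>C. g i) * (\<Prod>i\<in>D. g i)) = w (f x)"
      unfolding x w_def f_def by (simp add: prod_split2)
  qed
  also have "\<dots> = (\<Sum>y\<in>Y. \<Sum>x | x \<in> X \<and> f x = y. w (f x))"
  proof (rule sum.group[symmetric, OF fX fY])
    show "f ` X \<subseteq> Y"
    proof
      fix y assume "y \<in> f ` X"
      then obtain C D where CD: "C \<subseteq> S" "card C = a" "D \<subseteq> S" "card D = b" and y: "y = (C \<union> D, C \<inter> D)"
        unfolding X_def XC_def XD_def f_def by auto
      have fC: "finite C" and fD: "finite D" using CD S finite_subset by auto
      have "card (C \<inter> D) \<le> a" using CD fC by (metis card_mono Int_lower1)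
      moreover have "card (C \<inter> D) \<le> b" using CD fD by (metis card_mono Int_lower2)
      moreover have "card C + card D = card (C \<union> D) + card (C \<inter> D)" using fC fD by (rule card_Un_Int)
      ultimately show "y \<in> Y" unfolding Y_def y using CD by auto
    qed
  qed
  also have "\<dots> = (\<Sum>y\<in>Y. of_nat ((card (fst y) - card (snd y)) choose (a - card (snd y))) * w y)"
  proof (intro sum.cong refl)
    fix y assume "y \<in> Y"
    then obtain I A where y: "y = (I, A)" and IA: "I \<subseteq> S" "A \<subseteq> I" "card A \<le> a" "card A \<le> b" "card I = a + b - card A"
      unfolding Y_def by auto
    have "(\<Sum>x | x \<in> X \<and> f x = y. w (f x)) = (\<Sum>x | x \<in> X \<and> f x = y. w y)" by simp
    also have "\<dots> = of_nat (card {x \<in> X. f x = y}) * w y" by simp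
    also have "card {x \<in> X. f x = y} = (card I - card A) choose (a - card A)"
      unfolding X_def XC_def XD_def f_def y by (rule fiber_card[OF S IA])
    finally show "(\<Sum>x | x \<in> X \<and> f x = y. w (f x)) = of_nat ((card (fst y) - card (snd y)) choose (a - card (snd y))) * w y"
      by (simp add: y)
  qed
  also have "\<dots> = (\<Sum>p\<in>{..min a b}. \<Sum>y | y \<in> Y \<and> card (snd y) = p. of_nat ((card (fst y) - card (snd y)) choose (a - card (snd y))) * w y)"
    by (rule sum.group[symmetric, OF fY]) (auto simp: Y_def)
  also have "\<dots> = (\<Sum>p\<le>min a b. of_nat ((a + b - 2 * p) choose (a - p)) * TS S g p (a + b - 2 * p))"
  proof (intro sum.cong refl)
    fix p assume p: "p \<in> {..min a b}"
    have Yp: "{y. y \<in> Y \<and> card (snd y) = p} = Sigma {I. I \<subseteq> S \<and> card I = p + (a + b - 2 * p)} (\<lambda>I. {A. A \<subseteq> I \<and> card A = p})"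
      using p unfolding Y_def by auto
    have fin: "finite {I. I \<subseteq> S \<and> card I = p + (a + b - 2 * p)}" by (rule finite_subset[of _ "Pow S"]) (use S in auto)
    have fin2: "\<forall>I\<in>{I. I \<subseteq> S \<and> card I = p + (a + b - 2 * p)}. finite {A. A \<subseteq> I \<and> card A = p}"
    proof
      fix I assume "I \<in> {I. I \<subseteq> S \<and> card I = p + (a + b - 2 * p)}"
      hence "finite I" using S finite_subset by auto
      hence "finite (Pow I)" by simp
      moreover have "{A. A \<subseteq> I \<and> card A = p} \<subseteq> Pow I" by auto
      ultimately show "finite {A. A \<subseteq> I \<and> card A = p}" using finite_subset by blast
    qed
    have "(\<Sum>y | y \<in> Y \<and> card (snd y) = p. of_nat ((card (fst y) - card (snd y)) choose (a - card (snd y))) * w y)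
       = (\<Sum>y | y \<in> Y \<and> card (snd y) = p. of_nat ((a + b - 2 * p) choose (a - p)) * w y)"
    proof (intro sum.cong refl)
      fix y assume "y \<in> {y. y \<in> Y \<and> card (snd y) = p}"
      hence "card (fst y) = a + b - p" "card (snd y) = p" unfolding Y_def by auto
      thus "of_nat ((card (fst y) - card (snd y)) choose (a - card (snd y))) * w y = of_nat ((a + b - 2 * p) choose (a - p)) * w y"
        by (simp add: mult_2)
    qed
    also have "\<dots> = of_nat ((a + b - 2 * p) choose (a - p)) * (\<Sum>y | y \<in> Y \<and> card (snd y) = p. w y)"
      by (simp add: sum_distrib_left)
    also have "(\<Sum>y | y \<in> Y \<and> card (snd y) = p. w y) = TS S g p (a + b - 2 * p)"
      unfolding Yp TS_def w_def by (subst sum.Sigma[OF fin fin2]) (simp add: case_prod_unfold)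
    finally show "(\<Sum>y | y \<in> Y \<and> card (snd y) = p. of_nat ((card (fst y) - card (snd y)) choose (a - card (snd y))) * w y) = of_nat ((a + b - 2 * p) choose (a - p)) * TS S g p (a + b - 2 * p)" .
  qed
  finally show ?thesis unfolding XC_def XD_def .
qed

theorem theorem7:
  fixes n m l :: nat
  assumes "0 < n" "0 < m" "0 < l" "m \<le> n - 1" "l \<le> n - 1"
  shows "(\<Sum>j=0..n-m-1.
            (let k = int m - int l + 2 * int j in
              if k < 0 then 0
              else of_nat (nat k choose j) *
                   calY n (replicate (n - m - j - 1) 2 @ replicate (nat k) 1)))
         = (1 / (of_nat n)^2) * of_nat (n choose m) * of_nat (n choose l)"
proof -
  define a where "a = n - m - 1"
  define b where "b = n - l - 1"
  define F where "F = (\<lambda>p. if p \<le> min a b then of_nat ((a + b - 2 * p) choose (a - p)) *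
      calY n (replicate p 2 @ replicate (a + b - 2 * p) 1) else (0::complex))"
  have tm: "(let k = int m - int l + 2 * int j in
              if k < 0 then 0
              else of_nat (nat k choose j) *
                   calY n (replicate (n - m - j - 1) 2 @ replicate (nat k) 1)) = F (a - j)"
    if j: "j \<in> {0..a}" for j
  proof -
    have ja: "j \<le> a" using j by simp
    have nm: "n - m - j - 1 = a - j" by (simp add: a_def)
    have ka: "int m - int l + 2 * int j = int (a + b) - 2 * int (a - j)"
      using assms ja unfolding a_def b_def by linarith
    show ?thesis
    proof (cases "int m - int l + 2 * int j < 0")
      case True
      hence "\<not> (a - j \<le> min a b)" using ka by linarith
      thus ?thesis using True by (simp add: F_def Let_def)
    next
      case False
      hence nk: "nat (int m - int l + 2 * int j) = a + b - 2 * (a - j)" using ka by linarith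
      show ?thesis
      proof (cases "a - j \<le> b")
        case True
        have "a - (a - j) = j" using ja by simp
        thus ?thesis using False True ja unfolding Let_def nk nm by (simp add: F_def)
      next
        case c2: False
        have "a + b - 2 * (a - j) < j" using c2 False ka by linarith
        hence "(a + b - 2 * (a - j)) choose j = 0" by simp
        thus ?thesis using False c2 by (simp add: F_def Let_def nk)
      qed
    qed
  qed
  have "(\<Sum>j=0..n-m-1.
            (let k = int m - int l + 2 * int j in
              if k < 0 then 0
              else of_nat (nat k choose j) *
                   calY n (replicate (n - m - j - 1) 2 @ replicate (nat k) 1)))
      = (\<Sum>j=0..a. F (a - j))"
    unfolding a_def[symmetric] by (rule sum.cong[OF refl tm])
  also have "\<dots> = (\<Sum>p=0..a. F p)"
    by (rule sum.reindex_bij_witness[of _ "\<lambda>x. a - x" "\<lambda>x. a - x"]) auto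
  also have "\<dots> = (\<Sum>p\<le>min a b. of_nat ((a + b - 2 * p) choose (a - p)) *
      calY n (replicate p 2 @ replicate (a + b - 2 * p) 1))"
  proof -
    have "(\<Sum>p=0..a. F p) = (\<Sum>p\<in>{0..a} \<inter> {p. p \<le> min a b}. of_nat ((a + b - 2 * p) choose (a - p)) *
      calY n (replicate p 2 @ replicate (a + b - 2 * p) 1))"
      unfolding F_def by (simp add: sum.If_cases, intro sum.cong, auto)
    also have "{0..a} \<inter> {p. p \<le> min a b} = {..min a b}" by auto
    finally show ?thesis .
  qed
  also have "\<dots> = (\<Sum>p\<le>min a b. of_nat ((a + b - 2 * p) choose (a - p)) * TS {1..n-1} (yy n) p (a + b - 2 * p))"
    by (intro sum.cong refl) (simp only: calY_TT TT_def TS_def)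
  also have "\<dots> = (\<Sum>C | C \<subseteq> {1..n-1} \<and> card C = a. \<Prod>i\<in>C. yy n i) * (\<Sum>D | D \<subseteq> {1..n-1} \<and> card D = b. \<Prod>i\<in>D. yy n i)"
    by (rule pair_sum[symmetric]) simp
  also have "\<dots> = (of_nat (n choose (a+1)) / of_nat n) * (of_nat (n choose (b+1)) / of_nat n)"
  proof -
    have ha: "a \<le> n - 1" and hb: "b \<le> n - 1" unfolding a_def b_def by auto
    show ?thesis by (simp only: esym[OF \<open>0 < n\<close> ha] esym[OF \<open>0 < n\<close> hb])
  qed
  also have "n choose (a+1) = n choose m"
  proof -
    have "a + 1 = n - m" using assms unfolding a_def by simp
    thus ?thesis using binomial_symmetric[of m n] assms by simp
  qed
  also have "n choose (b+1) = n choose l"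
  proof -
    have "b + 1 = n - l" using assms unfolding b_def by simp
    thus ?thesis using binomial_symmetric[of l n] assms by simp
  qed
  finally show ?thesis by (simp add: field_simps power2_eq_square)
qed

end
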